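(* Suppose (G1) and (G2) hold: for all $P\in\mathbf P$, $P\ll\lambda$, $\Omega(P)$ is compact, $\sup_P\sup_{v\in\Omega(P)}\frac{dP}{d\lambda}(v)<\infty$, $\inf_P\inf_{v\in\Omega(P)}\frac{dP}{d\lambda}(v)>0$; and for each $P$ there is a continuously differentiable bijection $T_P:[0,1]^{d_v}\to\Omega(P)$ with $\inf_P\inf_v|JT_P(v)|>0$ and $\sup_P\sup_v\|T_P'(v)\|_{o,2}<\infty$. For each $P\in\mathbf P$ let $\{\Delta_i(P)\}_{i\ge0}$ be a sequence of partitions of $\Omega(P)$ with the properties: $\Delta_i(P)=\{\Delta_{i,k}(P):0\le k\le 2^i-1\}$ consists of $P$-measurable sets with $\Delta_{0,0}(P)=\Omega(P)$; $\Delta_{i,k}(P)$ is the disjoint union of $\Delta_{i+1,2k}(P)$ and $\Delta_{i+1,2k+1}(P)$; $P(\Delta_{i,k}(P))=2^{-i}$; $\sup_{P}\max_k\sup_{v,v'\in\Delta_{i,k}(P)}\|v-v'\|_2=O(2^{-i/d_v})$; and the completed $\sigma$-algebra generated by $\bigcup_i\Delta_i(P)$ is the $P$-completion of the Borel $\sigma$-algebra (such sequences exist). Let $\mathcal B_{P,i}$ denote the $\sigma$-algebra generated by $\Delta_i(P)$. Then there are constants $K_0>0$, $K_1>0$ such that for all $P\in\mathbf P$, all $i\ge0$, and any $f$ with $f\in L^2_P$ for all $P\in\mathbf P$, $$E_P[(f(V)-E_P[f(V)\mid\mathcal B_{P,i}])^2]\le K_0\times\varpi^2(f,K_1\times2^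{-i/d_v},P).$$
   Context: $V\in\mathbf R^{d_v}$ has distribution $P\in\mathbf P$ with support $\Omega(P)$; $\lambda$ is Lebesgue measure; $JT_P$ is the Jacobian determinant, $T_P'$ the derivative. The integral modulus of continuity is $\varpi(f,h,P)\equiv\sup_{\|s\|\le h}\big(\int_{\Omega(P)}(f(v+s)-f(v))^21\{v+s\in\Omega(P)\}d\lambda(v)\big)^{1/2}$. *)

theory Defs
  imports "HOL-Probability.Probability"
begin

definition supp :: "('a::metric_space) measure \<Rightarrow> 'a set" where
  "supp P = {v. \<forall>e>0. emeasure P (ball v e) > 0}"

text \<open>Squared integral modulus of continuity (the square of the paper's varpi(f,h,P)):
  sup over norm s \<le> h of the Lebesgue integral over supp P of (f(v+s)-f(v))^2 1{v+s in supp P}.\<close>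
definition int_mod_sq ::
  "('a::euclidean_space \<Rightarrow> real) \<Rightarrow> real \<Rightarrow> 'a measure \<Rightarrow> ennreal" where
  "int_mod_sq f h P =
     (SUP s \<in> {s. norm s \<le> h}.
        \<integral>\<^sup>+ v. ennreal ((f (v + s) - f v)\<^sup>2) * indicator (supp P \<inter> {v. v + s \<in> supp P}) v \<partial>lborel)"

definition completed_sigma :: "'a measure \<Rightarrow> 'a set set \<Rightarrow> 'a set set" where
  "completed_sigma P S =
     {A. \<exists>B \<in> sigma_sets (space P) S. \<exists>N \<in> null_sets P. (A - B) \<union> (B - A) \<subseteq> N}"

end

theory Submission
  imports Defs
begin


lemma L2_mult:
  fixes f g :: "'a \<Rightarrow> real"
  assumes [measurable]: "f \<in> borel_measurable M" "g \<in> borel_measurable M"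
    and "integrable M (\<lambda>x. (f x)\<^sup>2)" "integrable M (\<lambda>x. (g x)\<^sup>2)"
  shows "integrable M (\<lambda>x. f x * g x)"
proof (rule Bochner_Integration.integrable_bound[where f="\<lambda>x. (f x)\<^sup>2 + (g x)\<^sup>2"])
  show "integrable M (\<lambda>x. (f x)\<^sup>2 + (g x)\<^sup>2)" using assms by auto
  show "AE x in M. norm (f x * g x) \<le> norm ((f x)\<^sup>2 + (g x)\<^sup>2)"
  proof (rule AE_I2)
    fix x
    have "\<bar>f x * g x\<bar> \<le> (f x)\<^sup>2 + (g x)\<^sup>2"
      proof -
      have "0 \<le> (\<bar>f x\<bar> - \<bar>g x\<bar>)\<^sup>2" by simp
      then have "2 * (\<bar>f x\<bar> * \<bar>g x\<bar>) \<le> (f x)\<^sup>2 + (g x)\<^sup>2"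
        by (simp add: power2_eq_square algebra_simps)
      moreover have "0 \<le> \<bar>f x\<bar> * \<bar>g x\<bar>" by simp
      ultimately have "\<bar>f x\<bar> * \<bar>g x\<bar> \<le> (f x)\<^sup>2 + (g x)\<^sup>2" by linarith
      then show ?thesis by (simp add: abs_mult)
    qed
    then show "norm (f x * g x) \<le> norm ((f x)\<^sup>2 + (g x)\<^sup>2)" by simp
  qed
qed simp

lemma L2_diff:
  fixes f g :: "'a \<Rightarrow> real"
  assumes [measurable]: "f \<in> borel_measurable M" "g \<in> borel_measurable M"
    and "integrable M (\<lambda>x. (f x)\<^sup>2)" "integrable M (\<lambda>x. (g x)\<^sup>2)"
  shows "integrable M (\<lambda>x. (f x - g x)\<^sup>2)"
proof -
  have "integrable M (\<lambda>x. (f x)\<^sup>2 - 2 * (f x * g x) + (g x)\<^sup>2)"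
    using assms L2_mult[OF assms] by auto
  moreover have "(\<lambda>x. (f x - g x)\<^sup>2) = (\<lambda>x. (f x)\<^sup>2 - 2 * (f x * g x) + (g x)\<^sup>2)"
    by (auto simp: power2_eq_square algebra_simps)
  ultimately show ?thesis by simp
qed

lemma cells:
  fixes D :: "nat \<Rightarrow> nat \<Rightarrow> 'a set"
  assumes root: "D 0 0 = S"
    and split: "\<And>i k. k < 2^i \<Longrightarrow> D i k = D (Suc i) (2*k) \<union> D (Suc i) (2*k+1)
                  \<and> D (Suc i) (2*k) \<inter> D (Suc i) (2*k+1) = {}"
  shows "(\<forall>k<2^i. D i k \<subseteq> S) \<and> (\<forall>k<2^i. \<forall>k'<2^i. k \<noteq> k' \<longrightarrow> D i k \<inter> D i k' = {})"
proof (induction i)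
  case 0
  then show ?case using root by auto
next
  case (Suc i)
  have par: "D (Suc i) j \<subseteq> D i (j div 2)" if "j < 2^Suc i" for j
  proof -
    have k: "j div 2 < 2^i" using that by auto
    have e: "j = 2 * (j div 2) + j mod 2" by simp
    have "j mod 2 = 0 \<or> j mod 2 = 1" by auto
    then have "j = 2 * (j div 2) \<or> j = 2 * (j div 2) + 1" using e by auto
    then show ?thesis using split[OF k] by (metis Un_upper1 Un_upper2)
  qed
  show ?case
  proof (intro conjI allI impI)
    fix k :: nat assume k: "k < 2 ^ Suc i"
    have "D (Suc i) k \<subseteq> D i (k div 2)" using par[OF k] .
    moreover have "k div 2 < 2^i" using k by auto
    ultimately show "D (Suc i) k \<subseteq> S" using Suc.IH by blast
  next
    fix k k' :: nat assume kk: "k < 2 ^ Suc i" "k' < 2 ^ Suc i" "k \<noteq> k'"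
    show "D (Suc i) k \<inter> D (Suc i) k' = {}"
    proof (cases "k div 2 = k' div 2")
      case True
      have k: "k div 2 < 2^i" using kk by auto
      have "(k = 2 * (k div 2) \<and> k' = 2 * (k div 2) + 1) \<or> (k' = 2 * (k div 2) \<and> k = 2 * (k div 2) + 1)"
      proof -
        have e: "k = 2 * (k div 2) + k mod 2" "k' = 2 * (k' div 2) + k' mod 2" by simp_all
        have "k mod 2 = 0 \<or> k mod 2 = 1" "k' mod 2 = 0 \<or> k' mod 2 = 1" by auto
        show ?thesis using True kk(3) by presburger
      qed
      then show ?thesis using split[OF k] by (metis Int_commute)
    next
      case False
      have "D i (k div 2) \<inter> D i (k' div 2) = {}" proof -
        have "k div 2 < 2^i" "k' div 2 < 2^i" using kk by auto
        then show ?thesis using Suc.IH False by blast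
      qed
      then show ?thesis using par[OF kk(1)] par[OF kk(2)] by auto
    qed
  qed
qed



lemma lin3:
  fixes u v w :: "'a \<Rightarrow> real"
  assumes "integrable M u" "integrable M v" "integrable M w"
  shows "(\<integral>x. a * u x + b * v x + c * w x \<partial>M) = a * (\<integral>x. u x \<partial>M) + b * (\<integral>x. v x \<partial>M) + c * (\<integral>x. w x \<partial>M)"
  using assms by simp

lemma cell_var:
  fixes f :: "'a \<Rightarrow> real"
  assumes M: "finite_measure M" and D[measurable]: "D \<in> sets M" and m0: "0 < measure M D"
    and f[measurable]: "f \<in> borel_measurable M" and f2: "integrable M (\<lambda>x. (f x)\<^sup>2)"
  shows "ennreal (\<integral>x. indicator D x * (f x - (\<integral>y. indicator D y * f y \<partial>M) / measure M D)\<^sup>2 \<partial>M)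
       = ennreal (1 / (2 * measure M D)) *
         (\<integral>\<^sup>+x. \<integral>\<^sup>+y. ennreal ((f x - f y)\<^sup>2) * indicator D x * indicator D y \<partial>M \<partial>M)"
proof -
  interpret finite_measure M by fact
  define m where "m = measure M D"
  define S where "S = (\<integral>y. indicator D y * f y \<partial>M)"
  define Q where "Q = (\<integral>y. indicator D y * (f y)\<^sup>2 \<partial>M)"
  have fi: "integrable M f" using square_integrable_imp_integrable[OF f] f2 by simp
  have iD: "integrable M (\<lambda>y. indicator D y :: real)" by (rule integrable_real_indicator[OF D]) (simp add: less_top[symmetric])
  have iDf: "integrable M (\<lambda>y. indicator D y * f y)"
    using integrable_mult_indicator[OF D fi] by simp
  have iDf2: "integrable M (\<lambda>y. indicator D y * (f y)\<^sup>2)"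
    using integrable_mult_indicator[OF D f2] by simp
  have mD: "(\<integral>y. indicator D y \<partial>M) = m" unfolding m_def using D by simp
  define R where "R x y = indicator D x * indicator D y * (f x - f y)\<^sup>2" for x y
  have Rnn: "0 \<le> R x y" for x y unfolding R_def by simp
  have Rform: "R x = (\<lambda>y. (indicator D x * (f x)\<^sup>2) * indicator D y + (- 2 * indicator D x * f x) * (indicator D y * f y)
      + indicator D x * (indicator D y * (f y)\<^sup>2))" for x
    by (auto simp: R_def power2_eq_square algebra_simps split: split_indicator)
  have Rint: "integrable M (R x)" for x unfolding Rform using iD iDf iDf2 by simp
  have Rval: "(\<integral>y. R x y \<partial>M) = indicator D x * (m * (f x)\<^sup>2 - 2 * f x * S + Q)" for x
    unfolding Rform lin3[OF iD iDf iDf2] mD S_def[symmetric] Q_def[symmetric]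
    by (simp add: algebra_simps)
  have inner: "(\<integral>\<^sup>+y. ennreal ((f x - f y)\<^sup>2) * indicator D x * indicator D y \<partial>M)
     = ennreal (indicator D x * (m * (f x)\<^sup>2 - 2 * f x * S + Q))" for x
  proof -
    have "(\<integral>\<^sup>+y. ennreal ((f x - f y)\<^sup>2) * indicator D x * indicator D y \<partial>M) = (\<integral>\<^sup>+y. ennreal (R x y) \<partial>M)"
      by (intro nn_integral_cong) (auto simp: R_def split: split_indicator)
    also have "\<dots> = ennreal (\<integral>y. R x y \<partial>M)"
      by (rule nn_integral_eq_integral[OF Rint]) (simp add: Rnn)
    finally show ?thesis by (simp add: Rval)
  qed
  define h where "h x = indicator D x * (m * (f x)\<^sup>2 - 2 * f x * S + Q)" for x
  have hnn: "0 \<le> h x" for x unfolding h_def Rval[symmetric] by (simp add: Rnn integral_nonneg_AE)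
  have hform: "h = (\<lambda>x. m * (indicator D x * (f x)\<^sup>2) + (- 2 * S) * (indicator D x * f x) + Q * indicator D x)"
    by (auto simp: h_def algebra_simps)
  have hint: "integrable M h" unfolding hform using iD iDf iDf2 by simp
  have hval: "(\<integral>x. h x \<partial>M) = 2 * m * Q - 2 * S\<^sup>2"
    unfolding hform lin3[OF iDf2 iDf iD] mD S_def[symmetric] Q_def[symmetric]
    by (simp add: power2_eq_square algebra_simps)
  have outer: "(\<integral>\<^sup>+x. \<integral>\<^sup>+y. ennreal ((f x - f y)\<^sup>2) * indicator D x * indicator D y \<partial>M \<partial>M)
      = ennreal (2 * m * Q - 2 * S\<^sup>2)"
    unfolding inner h_def[symmetric] hval[symmetric]
    by (rule nn_integral_eq_integral[OF hint]) (simp add: hnn)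
  define a where "a = S / m"
  have lform: "(\<lambda>x. indicator D x * (f x - a)\<^sup>2) = (\<lambda>x. 1 * (indicator D x * (f x)\<^sup>2) + (- 2 * a) * (indicator D x * f x) + a\<^sup>2 * indicator D x)"
    by (auto simp: power2_eq_square algebra_simps)
  have lval: "(\<integral>x. indicator D x * (f x - a)\<^sup>2 \<partial>M) = Q - S\<^sup>2 / m"
    unfolding lform lin3[OF iDf2 iDf iD] mD S_def[symmetric] Q_def[symmetric]
    using m0 unfolding a_def m_def by (simp add: power2_eq_square field_simps)
  have m0': "0 < m" using m0 m_def by simp
  have "ennreal (1 / (2 * m)) * ennreal (2 * m * Q - 2 * S\<^sup>2) = ennreal (1 / (2 * m) * (2 * m * Q - 2 * S\<^sup>2))"
  proof (rule ennreal_mult''[symmetric])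
    show "0 \<le> 2 * m * Q - 2 * S\<^sup>2" unfolding hval[symmetric] by (simp add: hnn integral_nonneg_AE)
  qed
  also have "1 / (2 * m) * (2 * m * Q - 2 * S\<^sup>2) = Q - S\<^sup>2 / m"
    using m0' by (simp add: field_simps)
  finally show ?thesis
    unfolding outer[unfolded m_def] lval[unfolded a_def S_def m_def] m_def[symmetric] S_def[symmetric]
    using lval[unfolded a_def] by (simp add: m_def)
qed



lemma single_sum:
  fixes c :: "nat \<Rightarrow> 'b::semiring_1"
  assumes j: "j < n" and x: "x \<in> D j"
    and disj: "\<And>k k'. k < n \<Longrightarrow> k' < n \<Longrightarrow> k \<noteq> k' \<Longrightarrow> D k \<inter> D k' = {}"
  shows "(\<Sum>k<n. c k * indicator (D k) x) = c j"
proof -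
  have "(\<Sum>k<n. c k * indicator (D k) x) = c j * indicator (D j) x + (\<Sum>k\<in>{..<n} - {j}. c k * indicator (D k) x)"
    using j by (subst sum.remove[of _ j]) auto
  also have "(\<Sum>k\<in>{..<n} - {j}. c k * indicator (D k) x) = 0"
  proof (rule sum.neutral, intro ballI)
    fix k assume "k \<in> {..<n} - {j}"
    then have "x \<notin> D k" using disj[of k j] j x by auto
    then show "c k * indicator (D k) x = 0" by simp
  qed
  finally show ?thesis using x by simp
qed

lemma pair_bound:
  fixes D :: "nat \<Rightarrow> 'a::metric_space set"
  assumes sub: "\<And>k. k < n \<Longrightarrow> D k \<subseteq> S"
    and diam: "\<And>k x y. k < n \<Longrightarrow> x \<in> D k \<Longrightarrow> y \<in> D k \<Longrightarrow> dist x y \<le> h"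
    and disj: "\<And>k k'. k < n \<Longrightarrow> k' < n \<Longrightarrow> k \<noteq> k' \<Longrightarrow> D k \<inter> D k' = {}"
  shows "(\<Sum>k<n. ennreal X * indicator (D k) x * indicator (D k) y)
       \<le> ennreal X * indicator S x * indicator S y * indicator {..h} (dist x y)"
proof (cases "\<exists>j<n. x \<in> D j \<and> y \<in> D j")
  case True
  then obtain j where j: "j < n" "x \<in> D j" "y \<in> D j" by auto
  have "(\<Sum>k<n. ennreal X * indicator (D k) x * indicator (D k) y) = (\<Sum>k<n. (ennreal X * indicator (D k) y) * indicator (D k) x)"
    by (simp add: mult_ac)
  also have "\<dots> = ennreal X * indicator (D j) y"
    by (rule single_sum[where D=D, OF j(1,2) disj])
  also have "\<dots> = ennreal X * indicator S x * indicator S y * indicator {..h} (dist x y)"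
  proof -
    have "x \<in> S" "y \<in> S" using j sub[OF j(1)] by auto
    then show ?thesis using j diam[OF j] by simp
  qed
  finally show ?thesis by simp
next
  case False
  have "(\<Sum>k<n. ennreal X * indicator (D k) x * indicator (D k) y) = 0"
  proof (rule sum.neutral, intro ballI)
    fix k assume "k \<in> {..<n}"
    then have "\<not> (x \<in> D k \<and> y \<in> D k)" using False by auto
    then show "ennreal X * indicator (D k) x * indicator (D k) y = 0" by (auto split: split_indicator)
  qed
  then show ?thesis by (metis zero_le)
qed

lemma partition_var:
  fixes f :: "'a \<Rightarrow> real" and D :: "nat \<Rightarrow> 'a set"
  assumes M: "prob_space M" and D: "\<And>k. k < n \<Longrightarrow> D k \<in> sets M"
    and disj: "\<And>k k'. k < n \<Longrightarrow> k' < n \<Longrightarrow> k \<noteq> k' \<Longrightarrow> D k \<inter> D k' = {}"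
    and mD: "\<And>k. k < n \<Longrightarrow> measure M (D k) = m" and m0: "0 < m" and nm: "real n * m = 1"
    and f[measurable]: "f \<in> borel_measurable M" and f2: "integrable M (\<lambda>x. (f x)\<^sup>2)"
    and a: "\<And>k. a k = (\<integral>y. indicator (D k) y * f y \<partial>M) / m"
  shows "ennreal (\<integral>x. (f x - (\<Sum>k<n. a k * indicator (D k) x))\<^sup>2 \<partial>M)
       = ennreal (1 / (2 * m)) *
         (\<Sum>k<n. \<integral>\<^sup>+x. \<integral>\<^sup>+y. ennreal ((f x - f y)\<^sup>2) * indicator (D k) x * indicator (D k) y \<partial>M \<partial>M)"
proof -
  interpret prob_space M by fact
  define U where "U = (\<Union>k\<in>{..<n}. D k)"
  have "prob U = (\<Sum>k<n. prob (D k))"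
    unfolding U_def by (rule finite_measure_finite_Union) (auto simp: D disjoint_family_on_def disj)
  also have "\<dots> = 1" using mD nm by simp
  finally have AEU: "AE x in M. x \<in> U" by (rule AE_prob_1)
  have gm: "(\<lambda>x. \<Sum>k<n. a k * indicator (D k) x) \<in> borel_measurable M"
    by (intro borel_measurable_sum borel_measurable_times borel_measurable_const borel_measurable_indicator D) simp
  have tm: "(\<lambda>x. indicator (D k) x * (f x - a k)\<^sup>2) \<in> borel_measurable M" if "k < n" for k
    using D[OF that] by measurable
  have ti: "integrable M (\<lambda>x. indicator (D k) x * (f x - a k)\<^sup>2)" if "k < n" for k
  proof -
    have "integrable M (\<lambda>x. (f x - a k)\<^sup>2)" by (rule L2_diff) (auto simp: f2)
    from integrable_mult_indicator[OF D[OF that] this] show ?thesis by simp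
  qed
  have "(\<integral>x. (f x - (\<Sum>k<n. a k * indicator (D k) x))\<^sup>2 \<partial>M) = (\<integral>x. (\<Sum>k<n. indicator (D k) x * (f x - a k)\<^sup>2) \<partial>M)"
  proof (rule integral_cong_AE)
    show "(\<lambda>x. (f x - (\<Sum>k<n. a k * indicator (D k) x))\<^sup>2) \<in> borel_measurable M" using gm by measurable
    show "(\<lambda>x. \<Sum>k<n. indicator (D k) x * (f x - a k)\<^sup>2) \<in> borel_measurable M"
      by (intro borel_measurable_sum tm) simp
    show "AE x in M. (f x - (\<Sum>k<n. a k * indicator (D k) x))\<^sup>2 = (\<Sum>k<n. indicator (D k) x * (f x - a k)\<^sup>2)"
      using AEU
    proof eventually_elim
      case (elim x)
      then obtain j where j: "j < n" "x \<in> D j" unfolding U_def by auto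
      have "(\<Sum>k<n. a k * indicator (D k) x) = a j" by (rule single_sum[where D=D, OF j disj])
      moreover have "(\<Sum>k<n. indicator (D k) x * (f x - a k)\<^sup>2) = (f x - a j)\<^sup>2"
        using single_sum[where D=D and c="\<lambda>k. (f x - a k)\<^sup>2", OF j disj] by (simp add: mult.commute)
      ultimately show ?case by simp
    qed
  qed
  also have "\<dots> = (\<Sum>k<n. \<integral>x. indicator (D k) x * (f x - a k)\<^sup>2 \<partial>M)"
    by (rule Bochner_Integration.integral_sum) (simp add: ti)
  finally have e1: "ennreal (\<integral>x. (f x - (\<Sum>k<n. a k * indicator (D k) x))\<^sup>2 \<partial>M)
      = (\<Sum>k<n. ennreal (\<integral>x. indicator (D k) x * (f x - a k)\<^sup>2 \<partial>M))"
    by (simp add: integral_nonneg_AE sum_nonneg)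
  have e2: "ennreal (\<integral>x. indicator (D k) x * (f x - a k)\<^sup>2 \<partial>M)
      = ennreal (1 / (2 * m)) * (\<integral>\<^sup>+x. \<integral>\<^sup>+y. ennreal ((f x - f y)\<^sup>2) * indicator (D k) x * indicator (D k) y \<partial>M \<partial>M)"
    if "k < n" for k
    using cell_var[OF finite_measure_axioms D[OF that] _ f f2] mD[OF that] m0 a[of k] by simp
  show ?thesis unfolding e1 by (simp add: e2 sum_distrib_left)
qed



lemma vol_cball_le:
  fixes h :: real
  assumes "0 \<le> h"
  shows "emeasure lborel (cball (0::'a::euclidean_space) h) \<le> ennreal ((2 * h) ^ DIM('a))"
proof -
  have sub: "cball (0::'a) h \<subseteq> cbox (- (h *\<^sub>R One)) (h *\<^sub>R One)"
  proof
    fix s :: 'a assume "s \<in> cball 0 h"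
    then have ns: "norm s \<le> h" by simp
    show "s \<in> cbox (- (h *\<^sub>R One)) (h *\<^sub>R One)"
      unfolding mem_box
    proof (intro ballI conjI)
      fix b :: 'a assume b: "b \<in> Basis"
      have "\<bar>s \<bullet> b\<bar> \<le> h" using Basis_le_norm[OF b, of s] ns by simp
      then show "- (h *\<^sub>R One) \<bullet> b \<le> s \<bullet> b" "s \<bullet> b \<le> h *\<^sub>R One \<bullet> b" using b by auto
    qed
  qed
  have "emeasure lborel (cball (0::'a) h) \<le> emeasure lborel (cbox (- (h *\<^sub>R One)) (h *\<^sub>R (One::'a)))"
    by (rule emeasure_mono[OF sub]) simp
  also have "\<dots> = ennreal ((2 * h) ^ DIM('a))"
  proof -
    have i: "(h *\<^sub>R One + h *\<^sub>R One) \<bullet> b = 2 * h" if "b \<in> (Basis::'a set)" for b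
      using that by (simp add: inner_add_left)
    have "(\<Prod>b\<in>(Basis::'a set). (h *\<^sub>R One + h *\<^sub>R One) \<bullet> b) = (\<Prod>b\<in>(Basis::'a set). 2 * h)"
      by (rule prod.cong) (simp_all add: i)
    then show ?thesis using assms by (simp add: emeasure_lborel_cbox_eq inner_diff_left)
  qed
  finally show ?thesis .
qed

lemma shift_bound:
  fixes f :: "'a::euclidean_space \<Rightarrow> real" and S :: "'a set"
  assumes f[measurable]: "f \<in> borel_measurable borel" and S[measurable]: "S \<in> sets borel"
  shows "(\<integral>\<^sup>+x. \<integral>\<^sup>+y. ennreal ((f x - f y)\<^sup>2) * indicator S x * indicator S y * indicator {..h} (dist x y) \<partial>lborel \<partial>lborel)
    \<le> emeasure lborel (cball (0::'a) h) *
       (SUP s\<in>{s. norm s \<le> h}. \<integral>\<^sup>+ v. ennreal ((f (v + s) - f v)\<^sup>2) * indicator (S \<inter> {v. v + s \<in> S}) v \<partial>lborel)"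
proof -
  define W where "W x y = ennreal ((f x - f y)\<^sup>2) * indicator S x * indicator S y * indicator {..h} (dist x y)" for x y
  define \<Phi> where "\<Phi> s = (\<integral>\<^sup>+ v. ennreal ((f (v + s) - f v)\<^sup>2) * indicator (S \<inter> {v. v + s \<in> S}) v \<partial>lborel)" for s
  define B where "B = (SUP s\<in>{s. norm s \<le> h}. \<Phi> s)"
  have Wm[measurable]: "(\<lambda>(x, y). W x y) \<in> borel_measurable (lborel \<Otimes>\<^sub>M lborel)"
    unfolding W_def by measurable
  have Wm2[measurable]: "W x \<in> borel_measurable lborel" for x
    unfolding W_def by measurable
  have shift: "(\<integral>\<^sup>+y. W x y \<partial>lborel) = (\<integral>\<^sup>+s. W x (x + s) \<partial>lborel)" for x
  proof -
    have "(\<integral>\<^sup>+y. W x y \<partial>lborel) = (\<integral>\<^sup>+y. W x y \<partial>distr lborel borel ((+) x))"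
      by (simp add: lborel_distr_plus)
    also have "\<dots> = (\<integral>\<^sup>+s. W x (x + s) \<partial>lborel)"
      by (subst nn_integral_distr) (auto simp: W_def)
    finally show ?thesis .
  qed
  have Vm: "(\<lambda>(x, s). W x (x + s)) \<in> borel_measurable (lborel \<Otimes>\<^sub>M lborel)"
    unfolding W_def by measurable
  have swap: "(\<integral>\<^sup>+x. \<integral>\<^sup>+s. W x (x + s) \<partial>lborel \<partial>lborel) = (\<integral>\<^sup>+s. \<integral>\<^sup>+x. W x (x + s) \<partial>lborel \<partial>lborel)"
    using lborel_pair.Fubini'[of "\<lambda>x s. W x (x + s)", OF Vm] by simp
  have pt: "(\<integral>\<^sup>+x. W x (x + s) \<partial>lborel) = indicator (cball 0 h) s * \<Phi> s" for s
  proof -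
    have "(\<integral>\<^sup>+x. W x (x + s) \<partial>lborel) = (\<integral>\<^sup>+x. indicator (cball 0 h) s * (ennreal ((f (x + s) - f x)\<^sup>2) * indicator (S \<inter> {v. v + s \<in> S}) x) \<partial>lborel)"
      by (intro nn_integral_cong) (auto simp: W_def dist_norm power2_commute split: split_indicator)
    also have "\<dots> = indicator (cball 0 h) s * \<Phi> s"
      unfolding \<Phi>_def by (rule nn_integral_cmult) measurable
    finally show ?thesis .
  qed
  have le: "indicator (cball 0 h) s * \<Phi> s \<le> indicator (cball 0 h) s * B" for s
  proof (cases "s \<in> cball 0 h")
    case True
    then have "\<Phi> s \<le> B" unfolding B_def by (intro SUP_upper) auto
    then show ?thesis using True by simp
  qed simp
  have "(\<integral>\<^sup>+x. \<integral>\<^sup>+y. W x y \<partial>lborel \<partial>lborel) = (\<integral>\<^sup>+s. indicator (cball 0 h) s * \<Phi> s \<partial>lborel)"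
    unfolding shift swap pt ..
  also have "\<dots> \<le> (\<integral>\<^sup>+s. indicator (cball (0::'a) h) s * B \<partial>lborel)"
    by (rule nn_integral_mono[OF le])
  also have "\<dots> = B * emeasure lborel (cball (0::'a) h)"
    using nn_integral_cmult_indicator[of "cball (0::'a) h" lborel B] by (simp add: mult.commute)
  finally show ?thesis unfolding W_def B_def \<Phi>_def by (simp add: mult.commute)
qed



lemma sum_to_W:
  fixes f :: "'a \<Rightarrow> real"
  assumes M: "sigma_finite_measure M" and D: "\<And>k. k < n \<Longrightarrow> D k \<in> sets M"
    and f[measurable]: "f \<in> borel_measurable M"
    and pw: "\<And>x y. (\<Sum>k<n. ennreal ((f x - f y)\<^sup>2) * indicator (D k) x * indicator (D k) y) \<le> W x y"
  shows "(\<Sum>k<n. \<integral>\<^sup>+x. \<integral>\<^sup>+y. ennreal ((f x - f y)\<^sup>2) * indicator (D k) x * indicator (D k) y \<partial>M \<partial>M)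
      \<le> (\<integral>\<^sup>+x. \<integral>\<^sup>+y. W x y \<partial>M \<partial>M)"
proof -
  interpret sigma_finite_measure M by fact
  define T where "T k x y = ennreal ((f x - f y)\<^sup>2) * indicator (D k) x * indicator (D k) y" for k x y
  have Tm2: "(\<lambda>(x, y). T k x y) \<in> borel_measurable (M \<Otimes>\<^sub>M M)" if "k < n" for k
    using D[OF that] unfolding T_def by measurable
  have Tm1: "T k x \<in> borel_measurable M" if "k < n" for k x
    using D[OF that] unfolding T_def by measurable
  have Tm3: "(\<lambda>x. \<integral>\<^sup>+y. T k x y \<partial>M) \<in> borel_measurable M" if "k < n" for k
    using borel_measurable_nn_integral[OF Tm2[OF that]] by simp
  have "(\<Sum>k<n. \<integral>\<^sup>+x. \<integral>\<^sup>+y. T k x y \<partial>M \<partial>M) = (\<integral>\<^sup>+x. (\<Sum>k<n. \<integral>\<^sup>+y. T k x y \<partial>M) \<partial>M)"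
    by (rule nn_integral_sum[symmetric]) (simp add: Tm3)
  also have "\<dots> = (\<integral>\<^sup>+x. \<integral>\<^sup>+y. (\<Sum>k<n. T k x y) \<partial>M \<partial>M)"
    by (intro nn_integral_cong nn_integral_sum[symmetric]) (simp add: Tm1)
  also have "\<dots> \<le> (\<integral>\<^sup>+x. \<integral>\<^sup>+y. W x y \<partial>M \<partial>M)"
    by (intro nn_integral_mono) (simp add: T_def pw)
  finally show ?thesis unfolding T_def .
qed

lemma density_step:
  fixes f :: "'a::euclidean_space \<Rightarrow> real" and h C :: real
  assumes p[measurable]: "p \<in> borel_measurable borel" and P: "P = density lborel (\<lambda>v. ennreal (p v))"
    and bound: "\<And>v. v \<in> S \<Longrightarrow> p v \<le> C" and C: "0 \<le> C"
    and f[measurable]: "f \<in> borel_measurable borel" and S[measurable]: "S \<in> sets borel"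
  defines "W \<equiv> \<lambda>x y. ennreal ((f x - f y)\<^sup>2) * indicator S x * indicator S y * indicator {..h} (dist x y)"
  shows "(\<integral>\<^sup>+x. \<integral>\<^sup>+y. W x y \<partial>completion P \<partial>completion P)
      \<le> ennreal (C * C) * (\<integral>\<^sup>+x. \<integral>\<^sup>+y. W x y \<partial>lborel \<partial>lborel)"
proof -
  have Wm[measurable]: "W x \<in> borel_measurable borel" for x unfolding W_def by measurable
  have Wm2: "(\<lambda>(x, y). ennreal (p y) * W x y) \<in> borel_measurable (lborel \<Otimes>\<^sub>M lborel)"
    unfolding W_def by measurable
  have Wm3: "(\<lambda>x. \<integral>\<^sup>+y. ennreal (p y) * W x y \<partial>lborel) \<in> borel_measurable lborel"
    using lborel.borel_measurable_nn_integral[OF Wm2] by simp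
  have Wm4: "(\<lambda>(x, y). W x y) \<in> borel_measurable (lborel \<Otimes>\<^sub>M lborel)"
    unfolding W_def by measurable
  have Wm5: "(\<lambda>x. \<integral>\<^sup>+y. W x y \<partial>lborel) \<in> borel_measurable lborel"
    using lborel.borel_measurable_nn_integral[OF Wm4] by simp
  have "(\<integral>\<^sup>+x. \<integral>\<^sup>+y. W x y \<partial>completion P \<partial>completion P) = (\<integral>\<^sup>+x. \<integral>\<^sup>+y. W x y \<partial>P \<partial>P)"
    by (simp only: nn_integral_completion)
  also have "\<dots> = (\<integral>\<^sup>+x. ennreal (p x) * (\<integral>\<^sup>+y. ennreal (p y) * W x y \<partial>lborel) \<partial>lborel)"
  proof -
    have "(\<integral>\<^sup>+y. W x y \<partial>P) = (\<integral>\<^sup>+y. ennreal (p y) * W x y \<partial>lborel)" for x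
      unfolding P by (rule nn_integral_density) simp_all
    then have "(\<integral>\<^sup>+x. \<integral>\<^sup>+y. W x y \<partial>P \<partial>P) = (\<integral>\<^sup>+x. \<integral>\<^sup>+y. ennreal (p y) * W x y \<partial>lborel \<partial>P)"
      by simp
    also have "\<dots> = (\<integral>\<^sup>+x. ennreal (p x) * (\<integral>\<^sup>+y. ennreal (p y) * W x y \<partial>lborel) \<partial>lborel)"
      unfolding P by (rule nn_integral_density) (use Wm3 in simp_all)
    finally show ?thesis .
  qed
  also have "\<dots> \<le> (\<integral>\<^sup>+x. ennreal (C * C) * (\<integral>\<^sup>+y. W x y \<partial>lborel) \<partial>lborel)"
  proof (rule nn_integral_mono)
    fix x
    have "ennreal (p x) * (\<integral>\<^sup>+y. ennreal (p y) * W x y \<partial>lborel) = (\<integral>\<^sup>+y. ennreal (p x) * (ennreal (p y) * W x y) \<partial>lborel)"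
      by (rule nn_integral_cmult[symmetric]) simp
    also have "\<dots> \<le> (\<integral>\<^sup>+y. ennreal (C * C) * W x y \<partial>lborel)"
    proof (rule nn_integral_mono)
      fix y
      show "ennreal (p x) * (ennreal (p y) * W x y) \<le> ennreal (C * C) * W x y"
      proof (cases "x \<in> S \<and> y \<in> S")
        case True
        have "ennreal (p x) * ennreal (p y) \<le> ennreal C * ennreal C"
          using bound True by (intro mult_mono ennreal_leI) auto
        then have "ennreal (p x) * ennreal (p y) \<le> ennreal (C * C)" using C by (simp add: ennreal_mult)
        then show ?thesis by (simp add: mult.assoc[symmetric] mult_right_mono)
      next
        case False
        then show ?thesis unfolding W_def by auto
      qed
    qed
    also have "\<dots> = ennreal (C * C) * (\<integral>\<^sup>+y. W x y \<partial>lborel)"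
      by (rule nn_integral_cmult) simp
    finally show "ennreal (p x) * (\<integral>\<^sup>+y. ennreal (p y) * W x y \<partial>lborel) \<le> ennreal (C * C) * (\<integral>\<^sup>+y. W x y \<partial>lborel)" .
  qed
  also have "\<dots> = ennreal (C * C) * (\<integral>\<^sup>+x. \<integral>\<^sup>+y. W x y \<partial>lborel \<partial>lborel)"
    by (rule nn_integral_cmult) (use Wm5 in simp)
  finally show ?thesis .
qed


lemma cond_exp_best:
  fixes f g :: "'a \<Rightarrow> real"
  assumes M: "prob_space M" and G: "G \<subseteq> sets M"
    and f[measurable]: "f \<in> borel_measurable M" and f2: "integrable M (\<lambda>x. (f x)\<^sup>2)"
    and g: "g \<in> borel_measurable (sigma (space M) G)" and g2: "integrable M (\<lambda>x. (g x)\<^sup>2)"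
  shows "(\<integral>x. (f x - real_cond_exp M (sigma (space M) G) f x)\<^sup>2 \<partial>M) \<le> (\<integral>x. (f x - g x)\<^sup>2 \<partial>M)"
proof -
  define F where "F = sigma (space M) G"
  interpret prob_space M by fact
  have Gp: "G \<subseteq> Pow (space M)" using G sets.sets_into_space by auto
  have sub: "subalgebra M F"
    unfolding subalgebra_def F_def using Gp G
    by (simp add: sets.sigma_sets_subset)
  interpret finite_measure_subalgebra M F
    by unfold_locales (rule sub)
  have gF: "g \<in> borel_measurable F" using g unfolding F_def .
  have gM[measurable]: "g \<in> borel_measurable M" using measurable_from_subalg[OF sub gF] .
  define c where "c = real_cond_exp M F f"
  have cF: "c \<in> borel_measurable F" and cM[measurable]: "c \<in> borel_measurable M"
    unfolding c_def by auto
  have fi: "integrable M f" using square_integrable_imp_integrable[OF f] f2 by simp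
  have c2: "integrable M (\<lambda>x. (c x)\<^sup>2)"
    unfolding c_def
    by (rule integrable_convex_cond_exp[of f UNIV]) (auto simp: fi f2 convex_power2)
  define e where "e x = c x - g x" for x
  have eF: "e \<in> borel_measurable F" unfolding e_def using gF cF by (intro borel_measurable_diff)
  have eM[measurable]: "e \<in> borel_measurable M" using measurable_from_subalg[OF sub eF] .
  have e2: "integrable M (\<lambda>x. (e x)\<^sup>2)" unfolding e_def by (rule L2_diff) (auto simp: c2 g2)
  have ef: "integrable M (\<lambda>x. e x * f x)" by (rule L2_mult) (auto simp: e2 f2)
  have ec: "integrable M (\<lambda>x. e x * c x)" by (rule L2_mult) (auto simp: e2 c2)
  have eq: "(\<integral>x. e x * c x \<partial>M) = (\<integral>x. e x * f x \<partial>M)"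
    unfolding c_def using real_cond_exp_intg(2)[OF ef eF f] .
  have fc2: "integrable M (\<lambda>x. (f x - c x)\<^sup>2)" by (rule L2_diff) (auto simp: c2 f2)
  have pw: "(\<lambda>x. (f x - g x)\<^sup>2) = (\<lambda>x. (f x - c x)\<^sup>2 + 2 * (e x * f x - e x * c x) + (e x)\<^sup>2)"
    by (auto simp: e_def power2_eq_square algebra_simps)
  have "(\<integral>x. (f x - g x)\<^sup>2 \<partial>M) = (\<integral>x. (f x - c x)\<^sup>2 \<partial>M) + 2 * ((\<integral>x. e x * f x \<partial>M) - (\<integral>x. e x * c x \<partial>M)) + (\<integral>x. (e x)\<^sup>2 \<partial>M)"
    unfolding pw using fc2 ef ec e2 by simp
  also have "\<dots> \<ge> (\<integral>x. (f x - c x)\<^sup>2 \<partial>M)"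
    using eq by (simp add: integral_nonneg_AE)
  finally show ?thesis unfolding c_def F_def by simp
qed


theorem lemmaG2:
  fixes PP :: "(real ^ 'n) measure set"
    and \<Delta> :: "(real ^ 'n) measure \<Rightarrow> nat \<Rightarrow> nat \<Rightarrow> (real ^ 'n) set"
  assumes distr: "\<And>P. P \<in> PP \<Longrightarrow> prob_space P \<and> sets P = sets borel"
    and abs_cont: "\<And>P. P \<in> PP \<Longrightarrow> absolutely_continuous lborel P"
    and compact_supp: "\<And>P. P \<in> PP \<Longrightarrow> compact (supp P)"
    and dens: "\<exists>c C. 0 < c \<and> (\<forall>P\<in>PP. \<exists>p. p \<in> borel_measurable borel \<and> (\<forall>v. 0 \<le> p v)
                 \<and> P = density lborel (\<lambda>v. ennreal (p v))
                 \<and> (\<forall>v\<in>supp P. c \<le> p v \<and> p v \<le> C))"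
    and G2: "\<exists>cJ CT. 0 < cJ \<and> (\<forall>P\<in>PP. \<exists>(T :: real ^ 'n \<Rightarrow> real ^ 'n) (T' :: real ^ 'n \<Rightarrow> ((real ^ 'n) \<Rightarrow>\<^sub>L (real ^ 'n))).
                 bij_betw T (cbox 0 One) (supp P)
               \<and> (\<forall>v\<in>cbox 0 One. (T has_derivative blinfun_apply (T' v)) (at v within cbox 0 One))
               \<and> continuous_on (cbox 0 One) T'
               \<and> (\<forall>v\<in>cbox 0 One. cJ \<le> \<bar>det (matrix (blinfun_apply (T' v)))\<bar> \<and> norm (T' v) \<le> CT))"
    and part_meas: "\<And>P i k. P \<in> PP \<Longrightarrow> k < 2 ^ i \<Longrightarrow> \<Delta> P i k \<in> sets (completion P)"
    and part_root: "\<And>P. P \<in> PP \<Longrightarrow> \<Delta> P 0 0 = supp P"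
    and part_split: "\<And>P i k. P \<in> PP \<Longrightarrow> k < 2 ^ i \<Longrightarrow>
           \<Delta> P i k = \<Delta> P (Suc i) (2 * k) \<union> \<Delta> P (Suc i) (2 * k + 1)
         \<and> \<Delta> P (Suc i) (2 * k) \<inter> \<Delta> P (Suc i) (2 * k + 1) = {}"
    and part_prob: "\<And>P i k. P \<in> PP \<Longrightarrow> k < 2 ^ i \<Longrightarrow>
           measure (completion P) (\<Delta> P i k) = 1 / 2 ^ i"
    and part_diam: "\<exists>C N. \<forall>i\<ge>N. \<forall>P\<in>PP. \<forall>k<2 ^ i. \<forall>v\<in>\<Delta> P i k. \<forall>v'\<in>\<Delta> P i k.
           dist v v' \<le> C * 2 powr (- (real i / real CARD('n)))"
    and part_gen: "\<And>P. P \<in> PP \<Longrightarrow>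
           completed_sigma P (\<Union>i. \<Delta> P i ` {..<2 ^ i}) = sets (completion P)"
  shows "\<exists>K0 K1. 0 < K0 \<and> 0 < K1 \<and>
    (\<forall>P\<in>PP. \<forall>i::nat. \<forall>f :: real ^ 'n \<Rightarrow> real.
       (f \<in> borel_measurable borel \<and> (\<forall>Q\<in>PP. integrable Q (\<lambda>v. (f v)\<^sup>2))) \<longrightarrow>
       ennreal (\<integral>v. (f v - real_cond_exp (completion P)
                     (sigma (space (completion P)) (\<Delta> P i ` {..<2 ^ i})) f v)\<^sup>2 \<partial>completion P)
       \<le> ennreal K0 * int_mod_sq f (K1 * 2 powr (- (real i / real CARD('n)))) P)"
proof -
  obtain c C where c0: "0 < c" and dC: "\<forall>P\<in>PP. \<exists>p. p \<in> borel_measurable borel \<and> (\<forall>v. 0 \<le> p v)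
                 \<and> P = density lborel (\<lambda>v. ennreal (p v))
                 \<and> (\<forall>v\<in>supp P. c \<le> p v \<and> p v \<le> C)"
    using dens by blast
  define C1 where "C1 = max C 1"
  obtain cJ CT where G2': "\<forall>P\<in>PP. \<exists>(T :: real ^ 'n \<Rightarrow> real ^ 'n) (T' :: real ^ 'n \<Rightarrow> ((real ^ 'n) \<Rightarrow>\<^sub>L (real ^ 'n))).
                 bij_betw T (cbox 0 One) (supp P)
               \<and> (\<forall>v\<in>cbox 0 One. (T has_derivative blinfun_apply (T' v)) (at v within cbox 0 One))
               \<and> continuous_on (cbox 0 One) T'
               \<and> (\<forall>v\<in>cbox 0 One. cJ \<le> \<bar>det (matrix (blinfun_apply (T' v)))\<bar> \<and> norm (T' v) \<le> CT)"
    using G2 by blast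
  obtain Cd N where diamN: "\<forall>i\<ge>N. \<forall>P\<in>PP. \<forall>k<2 ^ i. \<forall>v\<in>\<Delta> P i k. \<forall>v'\<in>\<Delta> P i k.
           dist v v' \<le> Cd * 2 powr (- (real i / real CARD('n)))"
    using part_diam by blast
  obtain Bc where Bc: "\<forall>x\<in>cbox (0::real^'n) One. norm x \<le> Bc"
    using bounded_cbox[of "0::real^'n" One] unfolding bounded_iff by blast
  define R0 where "R0 = max CT 0 * (2 * max Bc 0)"
  have R0nn: "0 \<le> R0" unfolding R0_def by simp
  have suppdiam: "dist v v' \<le> R0" if P: "P \<in> PP" and v: "v \<in> supp P" "v' \<in> supp P" for P v v'
  proof -
    obtain T T' where T: "bij_betw T (cbox 0 One) (supp P)"
      "\<forall>v\<in>cbox 0 One. (T has_derivative blinfun_apply (T' v)) (at v within cbox 0 One)"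
      "\<forall>v\<in>cbox 0 One. cJ \<le> \<bar>det (matrix (blinfun_apply (T' v)))\<bar> \<and> norm (T' v) \<le> CT"
      using G2' P by blast
    obtain x where x: "x \<in> cbox 0 One" "v = T x" using T(1) v(1) unfolding bij_betw_def by blast
    obtain x' where x': "x' \<in> cbox 0 One" "v' = T x'" using T(1) v(2) unfolding bij_betw_def by blast
    have "norm (T x - T x') \<le> CT * norm (x - x')"
    proof (rule differentiable_bound[OF convex_box(1)])
      show "(T has_derivative blinfun_apply (T' z)) (at z within cbox 0 One)" if "z \<in> cbox 0 One" for z
        using T(2) that by blast
      show "onorm (blinfun_apply (T' z)) \<le> CT" if "z \<in> cbox 0 One" for z
        using T(3) that by (simp add: norm_blinfun.rep_eq[symmetric])
    qed (use x x' in auto)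
    also have "\<dots> \<le> max CT 0 * norm (x - x')" by (simp add: mult_right_mono)
    also have "\<dots> \<le> R0"
    proof -
      have "norm (x - x') \<le> norm x + norm x'" by (rule norm_triangle_ineq4)
      also have "\<dots> \<le> 2 * max Bc 0"
      proof -
        have "norm x \<le> Bc" "norm x' \<le> Bc" using Bc x(1) x'(1) by auto
        then show ?thesis by linarith
      qed
      finally show ?thesis unfolding R0_def by (simp add: mult_left_mono)
    qed
    finally show ?thesis using x x' by (simp add: dist_norm)
  qed
  have cellsP: "(\<forall>k<2^i. \<Delta> P i k \<subseteq> supp P) \<and> (\<forall>k<2^i. \<forall>k'<2^i. k \<noteq> k' \<longrightarrow> \<Delta> P i k \<inter> \<Delta> P i k' = {})"
    if P: "P \<in> PP" for P i
  proof (rule cells[of "\<Delta> P"])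
    show "\<Delta> P 0 0 = supp P" by (rule part_root[OF P])
    fix i k :: nat assume "k < 2 ^ i"
    then show "\<Delta> P i k = \<Delta> P (Suc i) (2 * k) \<union> \<Delta> P (Suc i) (2 * k + 1) \<and> \<Delta> P (Suc i) (2 * k) \<inter> \<Delta> P (Suc i) (2 * k + 1) = {}"
      by (rule part_split[OF P])
  qed
  have d0: "0 < real CARD('n)" by simp
  define K1 where "K1 = max Cd (R0 * 2 powr (real N / real CARD('n))) + 1"
  have K1pos: "0 < K1" unfolding K1_def using R0nn
    by (smt (verit) max.cobounded2 mult_nonneg_nonneg powr_ge_zero)
  have diam: "dist v v' \<le> K1 * 2 powr (- (real i / real CARD('n)))"
    if P: "P \<in> PP" and k: "k < 2^i" and v: "v \<in> \<Delta> P i k" "v' \<in> \<Delta> P i k" for P i k v v'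
  proof (cases "N \<le> i")
    case True
    then have "dist v v' \<le> Cd * 2 powr (- (real i / real CARD('n)))" using diamN P k v by blast
    also have "\<dots> \<le> K1 * 2 powr (- (real i / real CARD('n)))"
      by (rule mult_right_mono) (auto simp: K1_def)
    finally show ?thesis .
  next
    case False
    have "v \<in> supp P" "v' \<in> supp P" using cellsP[OF P, of i] k v by auto
    then have "dist v v' \<le> R0" using suppdiam P by blast
    also have "R0 = R0 * 2 powr (real N / real CARD('n)) * 2 powr (- (real N / real CARD('n)))"
      by (simp add: mult.assoc powr_add[symmetric])
    also have "\<dots> \<le> R0 * 2 powr (real N / real CARD('n)) * 2 powr (- (real i / real CARD('n)))"
    proof (rule mult_left_mono)
      show "2 powr (- (real N / real CARD('n))) \<le> 2 powr (- (real i / real CARD('n)))"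
        using False d0 by (intro powr_mono) (auto simp: divide_right_mono)
    qed (use R0nn in simp)
    also have "\<dots> \<le> K1 * 2 powr (- (real i / real CARD('n)))"
      by (rule mult_right_mono) (auto simp: K1_def)
    finally show ?thesis .
  qed
  define K0 where "K0 = C1 * C1 * (2 * K1) ^ CARD('n) / 2"
  have C1pos: "0 < C1" unfolding C1_def by simp
  have K0pos: "0 < K0" unfolding K0_def using C1pos K1pos by simp
  show ?thesis
  proof (intro exI conjI ballI allI impI)
    show "0 < K0" by (rule K0pos)
    show "0 < K1" by (rule K1pos)
    fix P i and f :: "real ^ 'n \<Rightarrow> real"
    assume P: "P \<in> PP" and fA: "f \<in> borel_measurable borel \<and> (\<forall>Q\<in>PP. integrable Q (\<lambda>v. (f v)\<^sup>2))"
    define M where "M = completion P"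
    define h where "h = K1 * 2 powr (- (real i / real CARD('n)))"
    define n where "n = (2::nat) ^ i"
    define m where "m = 1 / (2::real) ^ i"
    define G where "G = \<Delta> P i ` {..<2 ^ i}"
    have hpos: "0 < h" unfolding h_def using K1pos by simp
    have Pprob: "prob_space P" and sP: "sets P = sets borel" using distr[OF P] by auto
    interpret Pp: prob_space P by (rule Pprob)
    have Mprob: "prob_space M" unfolding M_def by (rule Pp.prob_space_completion)
    interpret Mp: prob_space M by (rule Mprob)
    have fB[measurable]: "f \<in> borel_measurable borel" using fA by blast
    have fP[measurable]: "f \<in> borel_measurable P" by (subst measurable_cong_sets[OF sP refl]) (rule fB)
    have fM[measurable]: "f \<in> borel_measurable M" unfolding M_def by (rule measurable_completion[OF fP])
    have f2P: "integrable P (\<lambda>v. (f v)\<^sup>2)" using fA P by blast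
    have f2M: "integrable M (\<lambda>v. (f v)\<^sup>2)" unfolding M_def
      using integrable_completion[of "\<lambda>v. (f v)\<^sup>2" P] f2P by simp
    have sub: "\<And>k. k < n \<Longrightarrow> \<Delta> P i k \<subseteq> supp P"
      and disj: "\<And>k k'. k < n \<Longrightarrow> k' < n \<Longrightarrow> k \<noteq> k' \<Longrightarrow> \<Delta> P i k \<inter> \<Delta> P i k' = {}"
      using cellsP[OF P, of i] unfolding n_def by auto
    have DM: "\<And>k. k < n \<Longrightarrow> \<Delta> P i k \<in> sets M" unfolding M_def n_def using part_meas[OF P] by auto
    have mD: "\<And>k. k < n \<Longrightarrow> measure M (\<Delta> P i k) = m" unfolding M_def n_def m_def using part_prob[OF P] by auto
    have m0: "0 < m" unfolding m_def by simp
    have nm: "real n * m = 1" unfolding n_def m_def by simp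
    define a where "a k = (\<integral>y. indicator (\<Delta> P i k) y * f y \<partial>M) / m" for k
    define g where "g x = (\<Sum>k<n. a k * indicator (\<Delta> P i k) x)" for x
    define F where "F = sigma (space M) G"
    have GM: "G \<subseteq> sets M" unfolding G_def using DM n_def by auto
    have GF: "\<Delta> P i k \<in> sets F" if "k < n" for k
    proof -
      have "G \<subseteq> Pow (space M)" using GM sets.sets_into_space by auto
      then have "sets F = sigma_sets (space M) G" unfolding F_def by (rule sets_measure_of)
      moreover have "\<Delta> P i k \<in> G" unfolding G_def using that n_def by auto
      ultimately show ?thesis by auto
    qed
    have gF: "g \<in> borel_measurable F" unfolding g_def
      by (intro borel_measurable_sum borel_measurable_times borel_measurable_const borel_measurable_indicator GF) simp
    have gM: "g \<in> borel_measurable M" unfolding g_def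
      by (intro borel_measurable_sum borel_measurable_times borel_measurable_const borel_measurable_indicator DM) simp
    have g2: "integrable M (\<lambda>x. (g x)\<^sup>2)"
    proof (rule Mp.integrable_const_bound[where B="(\<Sum>k<n. \<bar>a k\<bar>)\<^sup>2"])
      show "AE x in M. norm ((g x)\<^sup>2) \<le> (\<Sum>k<n. \<bar>a k\<bar>)\<^sup>2"
      proof (rule AE_I2)
        fix x
        have "\<bar>g x\<bar> \<le> (\<Sum>k<n. \<bar>a k * indicator (\<Delta> P i k) x\<bar>)" unfolding g_def by (rule sum_abs)
        also have "\<dots> \<le> (\<Sum>k<n. \<bar>a k\<bar>)" by (intro sum_mono) (auto split: split_indicator)
        finally have "\<bar>g x\<bar> \<le> (\<Sum>k<n. \<bar>a k\<bar>)" .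
        then have "\<bar>g x\<bar>\<^sup>2 \<le> (\<Sum>k<n. \<bar>a k\<bar>)\<^sup>2" by (intro power_mono) auto
        then show "norm ((g x)\<^sup>2) \<le> (\<Sum>k<n. \<bar>a k\<bar>)\<^sup>2" by simp
      qed
    qed (use gM in measurable)
    have step1: "(\<integral>v. (f v - real_cond_exp M F f v)\<^sup>2 \<partial>M) \<le> (\<integral>x. (f x - g x)\<^sup>2 \<partial>M)"
      unfolding F_def by (rule cond_exp_best[OF Mprob GM fM f2M _ g2]) (use gF F_def in simp)
    have step2: "ennreal (\<integral>x. (f x - g x)\<^sup>2 \<partial>M) = ennreal (1 / (2 * m)) *
         (\<Sum>k<n. \<integral>\<^sup>+x. \<integral>\<^sup>+y. ennreal ((f x - f y)\<^sup>2) * indicator (\<Delta> P i k) x * indicator (\<Delta> P i k) y \<partial>M \<partial>M)"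
      unfolding g_def by (rule partition_var[OF Mprob DM disj mD m0 nm fM f2M a_def])
    define W where "W x y = ennreal ((f x - f y)\<^sup>2) * indicator (supp P) x * indicator (supp P) y * indicator {..h} (dist x y)" for x y
    have step3: "(\<Sum>k<n. \<integral>\<^sup>+x. \<integral>\<^sup>+y. ennreal ((f x - f y)\<^sup>2) * indicator (\<Delta> P i k) x * indicator (\<Delta> P i k) y \<partial>M \<partial>M)
        \<le> (\<integral>\<^sup>+x. \<integral>\<^sup>+y. W x y \<partial>M \<partial>M)"
    proof (rule sum_to_W[OF _ DM fM])
      show "sigma_finite_measure M" by (rule Mp.sigma_finite_measure_axioms)
      fix x y
      show "(\<Sum>k<n. ennreal ((f x - f y)\<^sup>2) * indicator (\<Delta> P i k) x * indicator (\<Delta> P i k) y) \<le> W x y"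
        unfolding W_def
      proof (rule pair_bound[OF sub _ disj])
        fix k x y assume "k < n" "x \<in> \<Delta> P i k" "y \<in> \<Delta> P i k"
        then show "dist x y \<le> h" unfolding h_def using diam[OF P] n_def by auto
      qed
    qed
    obtain p where p: "p \<in> borel_measurable borel" "P = density lborel (\<lambda>v. ennreal (p v))"
      "\<forall>v\<in>supp P. c \<le> p v \<and> p v \<le> C" using dC P by blast
    have suppB: "supp P \<in> sets borel" using compact_supp[OF P] by (simp add: compact_imp_closed)
    have step4: "(\<integral>\<^sup>+x. \<integral>\<^sup>+y. W x y \<partial>M \<partial>M) \<le> ennreal (C1 * C1) * (\<integral>\<^sup>+x. \<integral>\<^sup>+y. W x y \<partial>lborel \<partial>lborel)"
      unfolding M_def W_def
      by (rule density_step[OF p(1,2) _ _ fB suppB]) (use p(3) in \<open>auto simp: C1_def\<close>)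
    have step5: "(\<integral>\<^sup>+x. \<integral>\<^sup>+y. W x y \<partial>lborel \<partial>lborel) \<le> emeasure lborel (cball (0::real^'n) h) * int_mod_sq f h P"
      unfolding W_def int_mod_sq_def by (rule shift_bound[OF fB suppB])
    have step6: "emeasure lborel (cball (0::real^'n) h) \<le> ennreal ((2 * h) ^ CARD('n))"
      using vol_cball_le[of h, where 'a="real^'n"] hpos by simp
    have arith: "1 / (2 * m) * (C1 * C1) * (2 * h) ^ CARD('n) = K0"
    proof -
      have "(2 powr (- (real i / real CARD('n)))) ^ CARD('n) = 2 powr (real CARD('n) * (- (real i / real CARD('n))))"
        by (rule powr_power) simp
      also have "\<dots> = 2 powr (- real i)" using d0 by simp
      also have "\<dots> = 1 / 2 ^ i" by (simp add: powr_minus powr_realpow divide_inverse)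
      finally have e: "(2 powr (- (real i / real CARD('n)))) ^ CARD('n) = 1 / 2 ^ i" .
      have "(2 * h) ^ CARD('n) = (2 * K1) ^ CARD('n) * (2 powr (- (real i / real CARD('n)))) ^ CARD('n)"
        unfolding h_def by (simp add: power_mult_distrib mult.assoc)
      then have "(2 * h) ^ CARD('n) = (2 * K1) ^ CARD('n) / 2 ^ i" using e by simp
      then show ?thesis unfolding K0_def m_def by (simp add: field_simps)
    qed
    have "ennreal (\<integral>v. (f v - real_cond_exp M F f v)\<^sup>2 \<partial>M) \<le> ennreal (\<integral>x. (f x - g x)\<^sup>2 \<partial>M)"
      by (rule ennreal_leI[OF step1])
    also have "\<dots> \<le> ennreal (1 / (2 * m)) * (ennreal (C1 * C1) * (emeasure lborel (cball (0::real^'n) h) * int_mod_sq f h P))"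
    proof -
      have "ennreal (C1 * C1) * (\<integral>\<^sup>+x. \<integral>\<^sup>+y. W x y \<partial>lborel \<partial>lborel) \<le> ennreal (C1 * C1) * (emeasure lborel (cball (0::real^'n) h) * int_mod_sq f h P)"
        by (rule mult_left_mono[OF step5]) simp
      then have s35: "(\<Sum>k<n. \<integral>\<^sup>+x. \<integral>\<^sup>+y. ennreal ((f x - f y)\<^sup>2) * indicator (\<Delta> P i k) x * indicator (\<Delta> P i k) y \<partial>M \<partial>M)
          \<le> ennreal (C1 * C1) * (emeasure lborel (cball (0::real^'n) h) * int_mod_sq f h P)"
        using step3 step4 by (meson order_trans)
      show ?thesis unfolding step2 by (rule mult_left_mono[OF s35]) simp
    qed
    also have "\<dots> \<le> ennreal (1 / (2 * m)) * (ennreal (C1 * C1) * (ennreal ((2 * h) ^ CARD('n)) * int_mod_sq f h P))"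
      using step6 by (intro mult_left_mono mult_right_mono) auto
    also have "\<dots> = ennreal (1 / (2 * m) * (C1 * C1) * (2 * h) ^ CARD('n)) * int_mod_sq f h P"
    proof -
      have e1: "ennreal (1 / (2 * m) * (C1 * C1) * (2 * h) ^ CARD('n)) = ennreal (1 / (2 * m) * (C1 * C1)) * ennreal ((2 * h) ^ CARD('n))"
        by (rule ennreal_mult) (use m0 hpos in simp_all)
      have e2: "ennreal (1 / (2 * m) * (C1 * C1)) = ennreal (1 / (2 * m)) * ennreal (C1 * C1)"
        by (rule ennreal_mult) (use m0 in simp_all)
      show ?thesis unfolding e1 e2 by (simp only: mult.assoc)
    qed
    also have "\<dots> = ennreal K0 * int_mod_sq f h P" unfolding arith ..
    finally show "ennreal (\<integral>v. (f v - real_cond_exp (completion P)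
                     (sigma (space (completion P)) (\<Delta> P i ` {..<2 ^ i})) f v)\<^sup>2 \<partial>completion P)
       \<le> ennreal K0 * int_mod_sq f (K1 * 2 powr (- (real i / real CARD('n)))) P"
      unfolding M_def F_def G_def h_def .
  qed
qed

end
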